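(* Let $p$ be a propositional variable. A substitution $\sigma$ is a unifier of $[1]p$ in $\mathbf{GLP}$ (i.e. $\mathbf{GLP}\vdash[1]\sigma(p)$) if and only if $\sigma\leq Q^k$ for some $k\geq 1$, where $Q^k$ denotes the substitution $p\mapsto Q^k(p)$ (leaving other variables fixed).
   Context: $\mathbf{GLP}$ is the polymodal logic with modalities $[0],[1],[2],\dots$ ($\langle k\rangle\phi:=\neg[k]\neg\phi$) axiomatized by: classical tautologies; $[k](\phi\to\psi)\to([k]\phi\to[k]\psi)$; $[k]([k]\phi\to\phi)\to[k]\phi$; $\langle j\rangle\phi\to[k]\langle j\rangle\phi$ for $j<k$; $[j]\phi\to[k]\phi$ for $j\leq k$; rules modus ponens and necessitation for each $[k]$. A substitution commutes with all connectives and modalities. For substitutions, $\tau\leq\sigma$ means there is a substitution $\theta$ with $\mathbf{GLP}\vdash\tau(q)\leftrightarrow\theta(\sigma(q))$ for every variable $q$. Define $Q_1(p):=p$, $Q_{i+1}(p):=p\lor[0]Q_i(p)$, and $Q^n(p):=\bigwedge_{i=1}^n([0]Q_i(p)\to Q_i(p))$. *)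

theory Defs
  imports Main
begin

datatype fm = Var nat | Bot | Imp fm fm | Box nat fm

definition Neg :: "fm \<Rightarrow> fm" where "Neg a = Imp a Bot"
definition Top :: fm where "Top = Neg Bot"
definition Or :: "fm \<Rightarrow> fm \<Rightarrow> fm" where "Or a b = Imp (Neg a) b"
definition And :: "fm \<Rightarrow> fm \<Rightarrow> fm" where "And a b = Neg (Imp a (Neg b))"
definition Iff :: "fm \<Rightarrow> fm \<Rightarrow> fm" where "Iff a b = And (Imp a b) (Imp b a)"
definition Dia :: "nat \<Rightarrow> fm \<Rightarrow> fm" where "Dia k a = Neg (Box k (Neg a))"

text \<open>Classical tautologies: formulas true under every Boolean valuation in which
variables and boxed subformulas are treated as atoms.\<close>

fun beval :: "(nat \<Rightarrow> bool) \<Rightarrow> (nat \<Rightarrow> fm \<Rightarrow> bool) \<Rightarrow> fm \<Rightarrow> bool" where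
  "beval v b (Var q) = v q"
| "beval v b Bot = False"
| "beval v b (Imp x y) = (beval v b x \<longrightarrow> beval v b y)"
| "beval v b (Box k x) = b k x"

definition tautology :: "fm \<Rightarrow> bool" where
  "tautology a \<longleftrightarrow> (\<forall>v b. beval v b a)"

inductive GLP :: "fm \<Rightarrow> bool" where
  taut: "tautology a \<Longrightarrow> GLP a"
| K: "GLP (Imp (Box k (Imp a b)) (Imp (Box k a) (Box k b)))"
| Loeb: "GLP (Imp (Box k (Imp (Box k a) a)) (Box k a))"
| neg_intro: "j < k \<Longrightarrow> GLP (Imp (Dia j a) (Box k (Dia j a)))"
| mono: "j \<le> k \<Longrightarrow> GLP (Imp (Box j a) (Box k a))"
| MP: "GLP (Imp a b) \<Longrightarrow> GLP a \<Longrightarrow> GLP b"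
| Nec: "GLP a \<Longrightarrow> GLP (Box k a)"

type_synonym substitution = "nat \<Rightarrow> fm"

primrec subst :: "substitution \<Rightarrow> fm \<Rightarrow> fm" where
  "subst s (Var q) = s q"
| "subst s Bot = Bot"
| "subst s (Imp x y) = Imp (subst s x) (subst s y)"
| "subst s (Box k x) = Box k (subst s x)"

text \<open>\<open>tau \<le> sigma\<close>: tau is (up to GLP-equivalence) an instance of sigma.\<close>

definition subst_le :: "substitution \<Rightarrow> substitution \<Rightarrow> bool" where
  "subst_le \<tau> \<sigma> \<longleftrightarrow> (\<exists>\<theta>. \<forall>q. GLP (Iff (\<tau> q) (subst \<theta> (\<sigma> q))))"

fun Q :: "nat \<Rightarrow> fm \<Rightarrow> fm" where
  "Q 0 p = p"  \<comment> \<open>unused index\<close>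
| "Q (Suc 0) p = p"
| "Q (Suc (Suc i)) p = Or p (Box 0 (Q (Suc i) p))"

fun Qconj :: "nat \<Rightarrow> fm \<Rightarrow> fm" where
  "Qconj 0 p = Top"  \<comment> \<open>empty conjunction, unused\<close>
| "Qconj (Suc 0) p = Imp (Box 0 (Q 1 p)) (Q 1 p)"
| "Qconj (Suc (Suc n)) p =
     And (Qconj (Suc n) p) (Imp (Box 0 (Q (Suc (Suc n)) p)) (Q (Suc (Suc n)) p))"

text \<open>The substitution \<open>p \<mapsto> Q^n(p)\<close>, leaving other variables fixed.\<close>

definition Qsubst :: "nat \<Rightarrow> nat \<Rightarrow> substitution" where
  "Qsubst p n = (\<lambda>q. if q = p then Qconj n (Var p) else Var q)"

end

theory Submission
  imports Defs
begin

lemma beval_derived[simp]: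
  "beval v b (Neg a) = (\<not> beval v b a)"
  "beval v b Top = True"
  "beval v b (Or a c) = (beval v b a \<or> beval v b c)"
  "beval v b (And a c) = (beval v b a \<and> beval v b c)"
  "beval v b (Iff a c) = (beval v b a = beval v b c)"
  "beval v b (Dia k a) = (\<not> b k (Neg a))"
  by (auto simp: Neg_def Top_def Or_def And_def Iff_def Dia_def)

lemma beval_foldr: "beval v b (foldr Imp Ps c) = ((\<forall>p\<in>set Ps. beval v b p) \<longrightarrow> beval v b c)"
  by (induction Ps) auto

lemma GLP_foldr: "GLP (foldr Imp Ps c) \<Longrightarrow> \<forall>p\<in>set Ps. GLP p \<Longrightarrow> GLP c"
proof (induction Ps)
  case Nil then show ?case by simp
next
  case (Cons a Ps)
  then show ?case using GLP.MP by auto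
qed

lemma taut_comb:
  assumes "\<forall>p\<in>set Ps. GLP p"
    and "\<And>v b. \<forall>p\<in>set Ps. beval v b p \<Longrightarrow> beval v b c"
  shows "GLP c"
proof -
  have "tautology (foldr Imp Ps c)" unfolding tautology_def beval_foldr using assms(2) by blast
  then show ?thesis using GLP_foldr GLP.taut assms(1) by blast
qed

lemma tc0: "(\<And>v b. beval v b c) \<Longrightarrow> GLP c"
  by (rule taut_comb[of "[]"]) simp_all
lemma tc1: assumes "GLP a1" "\<And>v b. beval v b a1 \<Longrightarrow> beval v b c" shows "GLP c"
  by (rule taut_comb[of "[a1]"]) (simp_all add: assms)
lemma tc2: assumes "GLP a1" "GLP a2" "\<And>v b. beval v b a1 \<Longrightarrow> beval v b a2 \<Longrightarrow> beval v b c" shows "GLP c"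
  by (rule taut_comb[of "[a1,a2]"]) (simp_all add: assms)
lemma tc3: assumes "GLP a1" "GLP a2" "GLP a3" "\<And>v b. beval v b a1 \<Longrightarrow> beval v b a2 \<Longrightarrow> beval v b a3 \<Longrightarrow> beval v b c" shows "GLP c"
  by (rule taut_comb[of "[a1,a2,a3]"]) (simp_all add: assms)
lemma tc5: assumes "GLP a1" "GLP a2" "GLP a3" "GLP a4" "GLP a5" "\<And>v b. beval v b a1 \<Longrightarrow> beval v b a2 \<Longrightarrow> beval v b a3 \<Longrightarrow> beval v b a4 \<Longrightarrow> beval v b a5 \<Longrightarrow> beval v b c" shows "GLP c"
  by (rule taut_comb[of "[a1,a2,a3,a4,a5]"]) (simp_all add: assms)

lemma box_mono: "GLP (Imp a c) \<Longrightarrow> GLP (Imp (Box k a) (Box k c))"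
  using GLP.MP GLP.K GLP.Nec by blast

lemma box_conj: "GLP (Imp (Box k x) (Imp (Box k y) (Box k (And x y))))"
proof -
  have "GLP (Imp x (Imp y (And x y)))" by (rule tc0) auto
  then have "GLP (Imp (Box k x) (Box k (Imp y (And x y))))" by (rule box_mono)
  moreover have "GLP (Imp (Box k (Imp y (And x y))) (Imp (Box k y) (Box k (And x y))))" by (rule GLP.K)
  ultimately show ?thesis by (rule tc2) auto
qed

lemma four: "GLP (Imp (Box 0 a) (Box 0 (Box 0 a)))"
proof -
  define B where "B = And a (Box 0 a)"
  have "GLP (Imp (Box 0 B) (Box 0 a))" unfolding B_def
    by (rule box_mono, rule tc0) auto
  then have "GLP (Imp a (Imp (Box 0 B) B))" unfolding B_def
    by (rule tc1) auto
  then have 1: "GLP (Imp (Box 0 a) (Box 0 (Imp (Box 0 B) B)))" by (rule box_mono)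
  have 2: "GLP (Imp (Box 0 (Imp (Box 0 B) B)) (Box 0 B))" by (rule GLP.Loeb)
  have "GLP (Imp B (Box 0 a))" unfolding B_def by (rule tc0) auto
  then have 3: "GLP (Imp (Box 0 B) (Box 0 (Box 0 a)))" by (rule box_mono)
  show ?thesis by (rule tc3[OF 1 2 3]) auto
qed

lemma refl1: "GLP (Box 1 (Imp (Box 0 C) C))"
proof -
  have a1: "GLP (Imp (Box 0 C) (Box 1 C))" by (rule GLP.mono) simp
  have a2: "GLP (Imp (Box 1 C) (Box 1 (Imp (Box 0 C) C)))"
    by (rule box_mono, rule tc0) auto
  have b1: "GLP (Imp (Dia 0 (Neg C)) (Box 1 (Dia 0 (Neg C))))" by (rule GLP.neg_intro) simp
  have b2: "GLP (Imp (Box 0 (Neg (Neg C))) (Box 0 C))"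
    by (rule box_mono, rule tc0) auto
  have b3: "GLP (Imp (Box 0 C) (Box 0 (Neg (Neg C))))"
    by (rule box_mono, rule tc0) auto
  have "GLP (Imp (Dia 0 (Neg C)) (Imp (Box 0 C) C))"
    by (rule tc1[OF b3]) auto
  then have b4: "GLP (Imp (Box 1 (Dia 0 (Neg C))) (Box 1 (Imp (Box 0 C) C)))" by (rule box_mono)
  show ?thesis by (rule tc5[OF a1 a2 b1 b2 b4]) auto
qed



lemma subst_derived[simp]:
  "subst s (Neg a) = Neg (subst s a)"
  "subst s Top = Top"
  "subst s (Or a c) = Or (subst s a) (subst s c)"
  "subst s (And a c) = And (subst s a) (subst s c)"
  "subst s (Iff a c) = Iff (subst s a) (subst s c)"
  by (auto simp: Neg_def Top_def Or_def And_def Iff_def)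

lemma subst_Q: "subst s (Q i x) = Q i (subst s x)"
  by (induction i x rule: Q.induct) auto

lemma subst_Qconj: "subst s (Qconj i x) = Qconj i (subst s x)"
  by (induction i x rule: Qconj.induct) (auto simp: subst_Q)

lemma box1_Qconj: "k \<ge> 1 \<Longrightarrow> GLP (Box 1 (Qconj k B))"
proof (induction k B rule: Qconj.induct)
  case (1 p) then show ?case by simp
next
  case (2 p) then show ?case using refl1 by simp
next
  case (3 n p)
  have a: "GLP (Box 1 (Qconj (Suc n) p))" using 3 by simp
  have c: "GLP (Box 1 (Imp (Box 0 (Q (Suc (Suc n)) p)) (Q (Suc (Suc n)) p)))" by (rule refl1)
  show ?case using box_conj a c by simp (metis GLP.MP)
qed

lemma beval_Q_of: "beval v b x \<Longrightarrow> beval v b (Q i x)"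
  by (induction i x rule: Q.induct) auto

lemma beval_Qconj_of: "beval v b x \<Longrightarrow> beval v b (Qconj i x)"
  by (induction i x rule: Qconj.induct) (auto simp: beval_Q_of)

lemma Qconj_conjunct:
  "1 \<le> j \<Longrightarrow> j \<le> k \<Longrightarrow> beval v b (Qconj k x) \<Longrightarrow> b 0 (Q j x) \<Longrightarrow> beval v b (Q j x)"
proof (induction k x rule: Qconj.induct)
  case (1 p) then show ?case by simp
next
  case (2 p) then show ?case by (cases j) auto
next
  case (3 n p) then show ?case by (cases "j = Suc (Suc n)") auto
qed

lemma Q_Qconj:
  "1 \<le> j \<Longrightarrow> j \<le> k \<Longrightarrow> beval v b (Qconj k x) \<Longrightarrow> beval v b (Q j x) \<Longrightarrow> beval v b x"
proof (induction j x rule: Q.induct)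
  case (1 p) then show ?case by simp
next
  case (2 p) then show ?case by simp
next
  case (3 i p)
  then show ?case using Qconj_conjunct[of "Suc i" k v b p] by auto
qed

section \<open>Translation\<close>

fun tr :: "fm \<Rightarrow> fm \<Rightarrow> fm" where
  "tr R (Var q) = Var q"
| "tr R Bot = Bot"
| "tr R (Imp x y) = Imp (tr R x) (tr R y)"
| "tr R (Box k x) = (if k = 0 then Box 0 x else if k = 1 then And (Box 1 x) (Imp R x) else Top)"

lemma beval_tr: "beval v b (tr R a) = beval v (\<lambda>k x. beval v b (tr R (Box k x))) a"
  by (induction a) auto

lemma taut_tr: "tautology a \<Longrightarrow> tautology (tr R a)"
  unfolding tautology_def using beval_tr by metis

fun RR :: "fm list \<Rightarrow> fm" where
  "RR [] = Top"
| "RR (a # T) = And (Imp (Box 0 a) a) (RR T)"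

lemma beval_RR: "beval v b (RR T) = (\<forall>a\<in>set T. b 0 a \<longrightarrow> beval v b a)"
  by (induction T) auto

lemma tr_Neg[simp]: "tr R (Neg a) = Neg (tr R a)"
  by (simp add: Neg_def)

lemma translation: "GLP \<phi> \<Longrightarrow> \<exists>S. \<forall>T. set S \<subseteq> set T \<longrightarrow> GLP (tr (RR T) \<phi>)"
proof (induction rule: GLP.induct)
  case (taut a)
  then show ?case using taut_tr GLP.taut by blast
next
  case (K k a b)
  show ?case
  proof (intro exI allI impI)
    fix T :: "fm list"
    have k: "GLP (Imp (Box k (Imp a b)) (Imp (Box k a) (Box k b)))" by (rule GLP.K)
    show "GLP (tr (RR T) (Imp (Box k (Imp a b)) (Imp (Box k a) (Box k b))))"
      by (rule tc1[OF k]) auto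
  qed
next
  case (Loeb k a)
  show ?case
  proof (intro exI allI impI)
    fix T :: "fm list"
    have k: "GLP (Imp (Box k (Imp (Box k a) a)) (Box k a))" by (rule GLP.Loeb)
    show "GLP (tr (RR T) (Imp (Box k (Imp (Box k a) a)) (Box k a)))"
      by (rule tc1[OF k]) auto
  qed
next
  case (neg_intro j k a)
  show ?case
  proof (intro exI allI impI)
    fix T :: "fm list"
    have k: "GLP (Imp (Dia j a) (Box k (Dia j a)))" by (rule GLP.neg_intro[OF neg_intro])
    show "GLP (tr (RR T) (Imp (Dia j a) (Box k (Dia j a))))"
      using neg_intro by (intro tc1[OF k]) (auto simp: Dia_def)
  qed
next
  case (mono j k a)
  show ?case
  proof (intro exI[of _ "[a]"] allI impI)
    fix T :: "fm list"
    assume T: "set [a] \<subseteq> set T"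
    have k: "GLP (Imp (Box j a) (Box k a))" by (rule GLP.mono[OF mono])
    have r: "GLP (Imp (RR T) (Imp (Box 0 a) a))"
      by (rule tc0) (use T in \<open>auto simp: beval_RR\<close>)
    show "GLP (tr (RR T) (Imp (Box j a) (Box k a)))"
      using mono by (intro tc2[OF k r]) auto
  qed
next
  case (MP a b)
  then obtain S1 S2 where s1: "\<forall>T. set S1 \<subseteq> set T \<longrightarrow> GLP (tr (RR T) (Imp a b))"
    and s2: "\<forall>T. set S2 \<subseteq> set T \<longrightarrow> GLP (tr (RR T) a)" by blast
  show ?case
  proof (intro exI[of _ "S1 @ S2"] allI impI)
    fix T :: "fm list" assume "set (S1 @ S2) \<subseteq> set T"
    then show "GLP (tr (RR T) b)" using s1 s2 GLP.MP by auto
  qed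
next
  case (Nec a k)
  show ?case
  proof (intro exI allI impI)
    fix T :: "fm list"
    have n: "GLP (Box k a)" by (rule GLP.Nec[OF Nec(1)])
    show "GLP (tr (RR T) (Box k a))"
      by (rule tc2[OF n Nec(1)]) auto
  qed
qed



section \<open>Pigeonhole\<close>

fun HH :: "fm list \<Rightarrow> fm" where
  "HH [] = Top"
| "HH (a # J) = And (And a (Box 0 a)) (HH J)"

lemma beval_HH: "beval v b (HH J) = (\<forall>a\<in>set J. beval v b a \<and> b 0 a)"
  by (induction J) auto

lemma box_Top: "GLP (Box k Top)"
  by (rule GLP.Nec, rule tc0) simp

lemma HH_box: "GLP (Imp (HH J) (Box 0 (HH J)))"
proof (induction J)
  case Nil
  show ?case by (rule tc1[OF box_Top]) simp
next
  case (Cons a J)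
  have 1: "GLP (Imp (Box 0 a) (Box 0 (Box 0 a)))" by (rule four)
  have 2: "GLP (Imp (Box 0 a) (Imp (Box 0 (Box 0 a)) (Box 0 (And a (Box 0 a)))))" by (rule box_conj)
  have 3: "GLP (Imp (Box 0 (And a (Box 0 a))) (Imp (Box 0 (HH J)) (Box 0 (And (And a (Box 0 a)) (HH J)))))"
    by (rule box_conj)
  show ?case by (rule tc5[OF 1 2 3 Cons box_Top]) (simp only: beval.simps beval_derived HH.simps, blast)
qed

lemma HH_step: "GLP (Imp (HH J) (Imp (Box 0 a) (Box 0 (HH (a # J)))))"
proof -
  have 1: "GLP (Imp (Box 0 a) (Box 0 (Box 0 a)))" by (rule four)
  have 2: "GLP (Imp (Box 0 a) (Imp (Box 0 (Box 0 a)) (Box 0 (And a (Box 0 a)))))" by (rule box_conj)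
  have 3: "GLP (Imp (Box 0 (And a (Box 0 a))) (Imp (Box 0 (HH J)) (Box 0 (And (And a (Box 0 a)) (HH J)))))"
    by (rule box_conj)
  show ?thesis by (rule tc5[OF 1 2 3 HH_box box_Top]) (simp only: beval.simps beval_derived HH.simps, blast)
qed

lemma pigeon:
  assumes RA: "GLP (Imp (RR T) A)"
  shows "set J \<subseteq> set T \<Longrightarrow> card (set T) < Suc m + card (set J) \<Longrightarrow> GLP (Imp (HH J) (Q (Suc m) A))"
proof (induction m arbitrary: J)
  case 0
  then have "set J = set T" using card_seteq[of "set T" "set J"] by simp
  then show ?case by (intro tc1[OF RA]) (auto simp: beval_HH beval_RR)
next
  case (Suc m)
  define B where "B = Box 0 (Q (Suc m) A)"
  have P: "GLP (Imp (HH J) (Imp (Box 0 a) B))" if a: "a \<in> set T" "a \<notin> set J" for a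
  proof -
    have "card (set (a # J)) = Suc (card (set J))" using a by simp
    then have "GLP (Imp (HH (a # J)) (Q (Suc m) A))"
      using Suc.prems a by (intro Suc.IH) auto
    then have 1: "GLP (Imp (Box 0 (HH (a # J))) B)" unfolding B_def by (rule box_mono)
    show ?thesis by (rule tc2[OF 1 HH_step]) auto
  qed
  let ?Ps = "Imp (RR T) A # map (\<lambda>a. Imp (HH J) (Imp (Box 0 a) B)) (filter (\<lambda>a. a \<notin> set J) T)"
  have "GLP (Imp (HH J) (Or A B))"
  proof (rule taut_comb[of ?Ps])
    show "\<forall>p\<in>set ?Ps. GLP p" using RA P by auto
  next
    fix v b assume H: "\<forall>p\<in>set ?Ps. beval v b p"
    show "beval v b (Imp (HH J) (Or A B))"
    proof (cases "beval v b A")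
      case False
      have "\<not> beval v b (RR T)" using H False by auto
      then obtain a where a: "a \<in> set T" "b 0 a" "\<not> beval v b a" by (auto simp: beval_RR)
      show ?thesis
      proof (cases "a \<in> set J")
        case True then show ?thesis using a by (auto simp: beval_HH)
      next
        case False
        then have "beval v b (Imp (HH J) (Imp (Box 0 a) B))" using H a by auto
        then show ?thesis using a by auto
      qed
    qed simp
  qed
  then show ?case unfolding B_def by simp
qed

lemma provable_Q:
  assumes "GLP (Imp (RR T) A)"
  shows "GLP (Q (Suc (card (set T))) A)"
proof -
  have "GLP (Imp (HH []) (Q (Suc (card (set T))) A))"
    by (rule pigeon[OF assms]) auto
  then show ?thesis by (rule tc1) auto
qed

theorem mainTheorem2:
  fixes p :: nat and \<sigma> :: substitution
  shows "GLP (subst \<sigma> (Box 1 (Var p))) \<longleftrightarrow> (\<exists>k\<ge>1. subst_le \<sigma> (Qsubst p k))"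
proof
  assume "GLP (subst \<sigma> (Box 1 (Var p)))"
  then have h: "GLP (Box 1 (\<sigma> p))" by simp
  define A where "A = \<sigma> p"
  obtain S where S: "\<forall>T. set S \<subseteq> set T \<longrightarrow> GLP (tr (RR T) (Box 1 A))"
    using translation h unfolding A_def by blast
  have "GLP (tr (RR S) (Box 1 A))" using S by blast
  then have "GLP (And (Box 1 A) (Imp (RR S) A))" by simp
  then have "GLP (Imp (RR S) A)" by (rule tc1) auto
  then have qk: "GLP (Q (Suc (card (set S))) A)" by (rule provable_Q)
  define k where "k = Suc (card (set S))"
  have k1: "1 \<le> k" by (simp add: k_def)
  have iff: "GLP (Iff A (Qconj k A))"
  proof (rule tc1[OF qk[folded k_def]])
    fix v b assume "beval v b (Q k A)"
    then show "beval v b (Iff A (Qconj k A))"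
      using Q_Qconj[of k k v b A] k1 beval_Qconj_of[of v b A k] by auto
  qed
  have "subst_le \<sigma> (Qsubst p k)"
    unfolding subst_le_def
  proof (intro exI[of _ \<sigma>] allI)
    fix q
    show "GLP (Iff (\<sigma> q) (subst \<sigma> (Qsubst p k q)))"
    proof (cases "q = p")
      case True
      then show ?thesis using iff by (simp add: Qsubst_def subst_Qconj A_def)
    next
      case False
      then show ?thesis by (simp add: Qsubst_def) (rule tc0, simp only: beval_derived)
    qed
  qed
  then show "\<exists>k\<ge>1. subst_le \<sigma> (Qsubst p k)" using k_def by auto
next
  assume "\<exists>k\<ge>1. subst_le \<sigma> (Qsubst p k)"
  then obtain k \<theta> where k: "k \<ge> 1" and th: "\<forall>q. GLP (Iff (\<sigma> q) (subst \<theta> (Qsubst p k q)))"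
    unfolding subst_le_def by blast
  have "GLP (Iff (\<sigma> p) (Qconj k (\<theta> p)))"
    using th[rule_format, of p] by (simp add: Qsubst_def subst_Qconj)
  then have "GLP (Imp (Qconj k (\<theta> p)) (\<sigma> p))" by (rule tc1) auto
  then have "GLP (Imp (Box 1 (Qconj k (\<theta> p))) (Box 1 (\<sigma> p)))" by (rule box_mono)
  then have "GLP (Box 1 (\<sigma> p))" using box1_Qconj[OF k] GLP.MP by blast
  then show "GLP (subst \<sigma> (Box 1 (Var p)))" by simp
qed

end
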